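(* As $N\to\infty$, $$\mathbf{P}_o\Big[\Big\{\tfrac{Sn}{N^d}<(\sqrt{\log\log n})^{-1}\Big\}\cup\Big\{\tfrac{Sn}{N^d}>\log N\Big\}\Big]\to0.$$
   Context: $d\ge3$. $(Y_t)$ is the lazy simple random walk on $\mathbb{Z}^d$ (stays put with probability $1/2$, otherwise moves to each neighbour with probability $1/(4d)$), $\mathbf{P}_o$ its law started at the origin. $L=mN$ with $m=m(N)$, $N$ integers, $L^2/N^d\to A\in(0,\infty)$ as $N\to\infty$. $n=\lfloor N^\delta\rfloor$ for a fixed $2<\delta<d$. $S=\inf\{\ell\ge0:Y_{n\ell}\notin(-L,L)^d\}$. *)

theory Defs
  imports "HOL-Probability.Probability"
begin

text \<open>Lattice Z^d is represented by the type int^'d, d = CARD('d).\<close>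

definition lazy_step :: "(int ^ 'd::finite) pmf" where
  "lazy_step = bind_pmf (bernoulli_pmf (1/2))
     (\<lambda>b. if b then return_pmf 0
          else pmf_of_set {axis i s | i s. s \<in> {1, -1::int}})"

definition walk_space :: "(int ^ 'd::finite) stream measure" where
  "walk_space = stream_space (measure_pmf lazy_step)"

definition walk_pos :: "nat \<Rightarrow> (int ^ 'd::finite) stream \<Rightarrow> int ^ 'd" where
  "walk_pos t \<omega> = sum_list (stake t \<omega>)"

definition in_box :: "nat \<Rightarrow> int ^ 'd::finite \<Rightarrow> bool" where
  "in_box L x \<longleftrightarrow> (\<forall>i. - int L < x $ i \<and> x $ i < int L)"

definition exit_index :: "nat \<Rightarrow> nat \<Rightarrow> (int ^ 'd::finite) stream \<Rightarrow> enat" where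
  "exit_index n L \<omega> =
     (if \<exists>l. \<not> in_box L (walk_pos (n * l) \<omega>)
      then enat (LEAST l. \<not> in_box L (walk_pos (n * l) \<omega>)) else \<infinity>)"

end

theory Submission
  imports Defs
begin

lemma sets_walk_space_cong: "sets (stream_space (measure_pmf (p::'a pmf))) = sets (stream_space (count_space UNIV))"
  by (rule sets_stream_space_cong) simp

lemma prob_space_walk: "prob_space (walk_space :: (int^'d::finite) stream measure)"
  unfolding walk_space_def by (rule prob_space.prob_space_stream_space) (rule prob_space_measure_pmf)

lemma walk_pos_meas[measurable]:
  "walk_pos t \<in> measurable (walk_space :: (int^'d::finite) stream measure) (count_space UNIV)"
proof -
  have "(\<lambda>\<omega>. sum_list (stake t \<omega>)) \<in> measurable (stream_space (count_space UNIV)) (count_space (UNIV :: (int^'d) set))"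
    by (rule measurable_compose[OF measurable_stake]) simp
  then show ?thesis unfolding walk_space_def walk_pos_def[abs_def]
    using measurable_cong_sets[OF sets_walk_space_cong refl] by blast
qed

lemma walk_pos_0[simp]: "walk_pos 0 \<omega> = 0" by (simp add: walk_pos_def)
lemma walk_pos_Suc[simp]: "walk_pos (Suc t) (z ## \<omega>) = z + walk_pos t \<omega>" by (simp add: walk_pos_def)

lemma nn_integral_walk:
  assumes "f \<in> borel_measurable (walk_space :: (int^'d::finite) stream measure)"
  shows "(\<integral>\<^sup>+X. f X \<partial>walk_space) = (\<integral>\<^sup>+x. (\<integral>\<^sup>+X. f (x ## X) \<partial>walk_space) \<partial>measure_pmf lazy_step)"
  using assms unfolding walk_space_def
  by (rule prob_space.nn_integral_stream_space[OF prob_space_measure_pmf])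

lemma meas_walk_fun: 
  "(\<lambda>\<omega>. g (walk_pos t \<omega>)) \<in> measurable (walk_space :: (int^'d::finite) stream measure) N"
  if "g \<in> space (count_space UNIV) \<rightarrow> space N" for g :: "int^'d \<Rightarrow> 'b"
  by (rule measurable_compose[OF walk_pos_meas]) (use that in simp)

lemma axis_set_eq: "{axis i s | i s. s \<in> {1, -1::int}} = (\<lambda>p. axis (fst p) (snd p)) ` (UNIV \<times> {1,-1::int})"
  by force

lemma axis_inj: "inj_on (\<lambda>p. axis (fst p) (snd p) :: int^'d::finite) (UNIV \<times> {1,-1::int})"
  by (auto simp: inj_on_def axis_eq_axis)

lemma card_axis_set: "card ({axis i s | i s. s \<in> {1, -1::int}} :: (int^'d::finite) set) = 2 * CARD('d)"
proof -
  have "card ({axis i s | i s. s \<in> {1, -1::int}} :: (int^'d::finite) set) = card ((UNIV::'d set) \<times> {1,-1::int})"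
    unfolding axis_set_eq by (simp add: card_image axis_inj)
  then show ?thesis by simp
qed

lemma lazy_coord:
  fixes h :: "int \<Rightarrow> real" and i0 :: "'d::finite"
  assumes h: "\<And>x. h x \<ge> 0"
  shows "(\<integral>\<^sup>+z. ennreal (h ((z::int^'d)$i0)) \<partial>measure_pmf lazy_step)
    = ennreal ((1 - 1/(2*CARD('d))) * h 0 + (h 1 + h (-1)) / (4*CARD('d)))"
proof -
  let ?S = "{axis i s | i s. s \<in> {1, -1::int}} :: (int^'d) set"
  have fin: "finite ?S" unfolding axis_set_eq by simp
  have ne: "?S \<noteq> {}" by auto
  have sum_eq: "(\<Sum>v\<in>?S. ennreal (h (v$i0))) = ennreal (h 1 + h (-1) + 2 * (real CARD('d) - 1) * h 0)"
  proof -
    have "(\<Sum>v\<in>?S. ennreal (h (v$i0))) = (\<Sum>p\<in>UNIV \<times> {1,-1::int}. ennreal (h ((axis (fst p) (snd p) :: int^'d)$i0)))"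
      unfolding axis_set_eq by (subst sum.reindex[OF axis_inj]) (simp add: o_def)
    also have "\<dots> = (\<Sum>i\<in>UNIV. \<Sum>s\<in>{1,-1::int}. ennreal (h ((axis i s :: int^'d)$i0)))"
      by (subst sum.cartesian_product) (simp add: case_prod_beta)
    also have "\<dots> = (\<Sum>i\<in>UNIV. ennreal (if i = i0 then h 1 + h (-1) else 2 * h 0))"
    proof (intro sum.cong refl)
      fix i :: 'd
      show "(\<Sum>s\<in>{1,-1::int}. ennreal (h ((axis i s :: int^'d)$i0))) = ennreal (if i = i0 then h 1 + h (-1) else 2 * h 0)"
      proof (cases "i = i0")
        case True
        then show ?thesis by (simp add: h)
      next
        case False
        then have z: "\<And>s. (axis i s :: int^'d)$i0 = 0" by (simp add: axis_def)
        have "(\<Sum>s\<in>{1,-1::int}. ennreal (h ((axis i s :: int^'d)$i0))) = (\<Sum>s\<in>{1,-1::int}. ennreal (h 0))"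
          by (simp only: z)
        also have "\<dots> = ennreal (h 0) + ennreal (h 0)" by (simp add: mult_2)
        also have "\<dots> = ennreal (2 * h 0)" by (simp only: mult_2 ennreal_plus[OF h h])
        finally show ?thesis using False by simp

      qed
    qed
    also have "\<dots> = ennreal (\<Sum>i\<in>UNIV. (if i = i0 then h 1 + h (-1) else 2 * h 0))"
      by (rule sum_ennreal) (simp add: h add_nonneg_nonneg)
    also have "(\<Sum>i\<in>UNIV. (if i = i0 then h 1 + h (-1) else 2 * h 0)) = h 1 + h (-1) + 2 * (real CARD('d) - 1) * h 0"
    proof -
      have "(\<Sum>i\<in>UNIV. (if i = i0 then h 1 + h (-1) else 2 * h 0)) = (h 1 + h (-1)) + (\<Sum>i\<in>UNIV-{i0}. 2 * h 0)"
        by (subst sum.remove[of _ i0]) auto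
      also have "(\<Sum>i\<in>UNIV-{i0}. 2 * h 0) = (CARD('d) - 1) * (2 * h 0)"
        by (simp add: card_Diff_singleton)
      moreover have "real (CARD('d) - 1) = real CARD('d) - 1" by (simp add: of_nat_diff Suc_le_eq)
      ultimately show ?thesis by (simp add: algebra_simps)
    qed
    finally show ?thesis .
  qed
  have cardpos: "CARD('d) \<ge> 1" by (simp add: Suc_le_eq)
  have "(\<integral>\<^sup>+z. ennreal (h ((z::int^'d)$i0)) \<partial>measure_pmf lazy_step)
     = ennreal (h 0) * ennreal (1/2) + (\<Sum>v\<in>?S. ennreal (h (v$i0))) / card ?S * ennreal (1/2)"
  proof -
    have ps: "(\<integral>\<^sup>+z. ennreal (h ((z::int^'d)$i0)) \<partial>measure_pmf (pmf_of_set ?S)) = (\<Sum>v\<in>?S. ennreal (h (v$i0))) / card ?S"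
      by (rule nn_integral_pmf_of_set[OF ne fin])
    show ?thesis
      unfolding lazy_step_def nn_integral_bind_pmf
      apply (subst nn_integral_bernoulli_pmf)
      apply simp_all
      apply (subst ps[simplified])
      apply simp
      done
  qed
  also have "\<dots> = ennreal ((1 - 1/(2*CARD('d))) * h 0 + (h 1 + h (-1)) / (4*CARD('d)))"
  proof -
    let ?a = "h 1 + h (-1) + 2 * (real CARD('d) - 1) * h 0"
    have a0: "?a \<ge> 0" using h cardpos by (intro add_nonneg_nonneg mult_nonneg_nonneg) auto
    have cp: "real (2 * CARD('d)) > 0" using cardpos by simp
    have "ennreal (h 0) * ennreal (1/2) + ennreal ?a / of_nat (2 * CARD('d)) * ennreal (1/2)
        = ennreal (h 0 * (1/2) + ?a / real (2 * CARD('d)) * (1/2))"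
    proof -
      have e1: "ennreal ?a / of_nat (2 * CARD('d)) = ennreal (?a / real (2 * CARD('d)))"
        using a0 cp by (simp only: ennreal_of_nat_eq_real_of_nat divide_ennreal)
      have b0: "?a / real (2 * CARD('d)) \<ge> 0" using a0 cp by simp
      show ?thesis unfolding e1
        using h[of 0] b0 by (simp only: ennreal_mult''[symmetric] ennreal_plus mult_nonneg_nonneg)
    qed
    also have "h 0 * (1/2) + ?a / real (2 * CARD('d)) * (1/2) = (1 - 1/(2*CARD('d))) * h 0 + (h 1 + h (-1)) / (4*CARD('d))"
      using cp by (simp add: field_simps)
    finally show ?thesis unfolding sum_eq card_axis_set .
  qed
  finally show ?thesis .
qed

lemma space_walk[simp]: "space (walk_space :: (int^'d::finite) stream measure) = UNIV"
  unfolding walk_space_def by (simp add: space_stream_space)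

lemma sets_walk_Collect:
  "{\<omega>. P (walk_pos t \<omega>)} \<in> sets (walk_space :: (int^'d::finite) stream measure)"
proof -
  have "Measurable.pred (walk_space :: (int^'d::finite) stream measure) (\<lambda>\<omega>. walk_pos t \<omega> \<in> {v. P v})"
    by (rule pred_sets2[OF _ walk_pos_meas]) simp
  then show ?thesis unfolding pred_def space_walk mem_Collect_eq by simp
qed

lemma lower_tail:
  fixes i :: "'d::finite" and L a :: real and T :: nat
  assumes L: "L > 0"
  shows "emeasure (walk_space :: (int^'d) stream measure)
           {\<omega>. \<exists>k\<le>T. L \<le> \<bar>a + real_of_int ((walk_pos k \<omega>)$i)\<bar>}
         \<le> ennreal ((a\<^sup>2 + real T / (2*CARD('d))) / L\<^sup>2)"
proof (induction T arbitrary: a)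
  case 0
  show ?case
  proof (cases "L \<le> \<bar>a\<bar>")
    case True
    then have "L\<^sup>2 \<le> a\<^sup>2" using L by (metis abs_le_square_iff abs_of_pos)
    then have "1 \<le> ennreal ((a\<^sup>2 + real 0 / (2*CARD('d))) / L\<^sup>2)" using L by (simp add: ennreal_1[symmetric] del: ennreal_1)
    moreover have "emeasure (walk_space :: (int^'d) stream measure) {\<omega>. \<exists>k\<le>0. L \<le> \<bar>a + real_of_int ((walk_pos k \<omega>)$i)\<bar>} \<le> 1"
      using prob_space.emeasure_le_1[OF prob_space_walk] by blast
    ultimately show ?thesis by (rule order_trans[rotated])
  next
    case False
    then show ?thesis by simp
  qed
next
  case (Suc T)
  define E where "E = (\<lambda>T a. {\<omega>. \<exists>k\<le>T. L \<le> \<bar>a + real_of_int ((walk_pos k \<omega>)$i)\<bar>} :: (int^'d) stream set)"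
  have meas: "E T' a' \<in> sets walk_space" for T' a'
  proof -
    have "E T' a' = (\<Union>k\<in>{..T'}. {\<omega>. (\<lambda>v. L \<le> \<bar>a' + real_of_int (v$i)\<bar>) (walk_pos k \<omega>)})"
      unfolding E_def by auto
    also have "\<dots> \<in> sets walk_space"
      by (rule sets.finite_UN) (simp, rule sets_walk_Collect[where P="\<lambda>v. L \<le> \<bar>a' + real_of_int (v$i)\<bar>"])
    finally show ?thesis .
  qed
  show ?case
  proof (cases "L \<le> \<bar>a\<bar>")
    case True
    then have "L\<^sup>2 \<le> a\<^sup>2" using L by (metis abs_le_square_iff abs_of_pos)
    moreover have "0 \<le> real (Suc T) / (2*CARD('d))" by simp
    ultimately have "L\<^sup>2 \<le> a\<^sup>2 + real (Suc T) / (2*CARD('d))" by linarith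
    then have "1 \<le> ennreal ((a\<^sup>2 + real (Suc T) / (2*CARD('d))) / L\<^sup>2)" using L
      by (simp add: ennreal_1[symmetric] del: ennreal_1 of_nat_Suc)
    moreover have "emeasure (walk_space :: (int^'d) stream measure) {\<omega>. \<exists>k\<le>Suc T. L \<le> \<bar>a + real_of_int ((walk_pos k \<omega>)$i)\<bar>} \<le> 1"
      using prob_space.emeasure_le_1[OF prob_space_walk] by blast
    ultimately show ?thesis by (rule order_trans[rotated])
  next
    case False
    have ind: "indicator (E (Suc T) a) (z ## X) = indicator (E T (a + real_of_int (z$i))) X" for z X
    proof -
      have "(z ## X \<in> E (Suc T) a) \<longleftrightarrow> (X \<in> E T (a + real_of_int (z$i)))"
      proof
        assume "z ## X \<in> E (Suc T) a"
        then obtain k where k: "k \<le> Suc T" "L \<le> \<bar>a + real_of_int ((walk_pos k (z ## X))$i)\<bar>"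
          unfolding E_def by blast
        then obtain k' where "k = Suc k'" using False by (cases k) auto
        then show "X \<in> E T (a + real_of_int (z$i))" unfolding E_def using k by (auto simp: add.assoc)
      next
        assume "X \<in> E T (a + real_of_int (z$i))"
        then obtain k where k: "k \<le> T" "L \<le> \<bar>a + real_of_int (z$i) + real_of_int ((walk_pos k X)$i)\<bar>"
          unfolding E_def by blast
        then show "z ## X \<in> E (Suc T) a" unfolding E_def
          by (intro CollectI exI[of _ "Suc k"]) (auto simp: add.assoc)
      qed
      then show ?thesis by (simp add: indicator_def)
    qed
    have "emeasure walk_space (E (Suc T) a) = (\<integral>\<^sup>+X. indicator (E (Suc T) a) X \<partial>walk_space)"
      by (rule nn_integral_indicator[symmetric]) (rule meas)
    also have "\<dots> = (\<integral>\<^sup>+z. (\<integral>\<^sup>+X. indicator (E (Suc T) a) (z ## X) \<partial>walk_space) \<partial>measure_pmf lazy_step)"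
      by (rule nn_integral_walk) (rule borel_measurable_indicator[OF meas])
    also have "\<dots> = (\<integral>\<^sup>+z. emeasure walk_space (E T (a + real_of_int (z$i))) \<partial>measure_pmf lazy_step)"
      by (simp add: ind nn_integral_indicator[OF meas])
    also have "\<dots> \<le> (\<integral>\<^sup>+z. ennreal (((a + real_of_int (z$i))\<^sup>2 + real T / (2*CARD('d))) / L\<^sup>2) \<partial>measure_pmf lazy_step)"
      by (rule nn_integral_mono) (use Suc.IH E_def in auto)
    also have "\<dots> = ennreal ((a\<^sup>2 + real (Suc T) / (2*CARD('d))) / L\<^sup>2)"
      apply (subst lazy_coord[where h = "\<lambda>x. ((a + real_of_int x)\<^sup>2 + real T / (2*CARD('d))) / L\<^sup>2"])
       apply (intro divide_nonneg_nonneg add_nonneg_nonneg; simp)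
      apply (rule arg_cong[where f=ennreal])
      using L apply (simp add: field_simps power2_eq_square)
      done
    finally show ?thesis unfolding E_def .
  qed
qed

lemma walk_step:
  fixes f :: "int^'d::finite \<Rightarrow> ennreal"
  shows "(\<integral>\<^sup>+\<omega>. f (walk_pos (Suc t) \<omega>) \<partial>walk_space)
       = (\<integral>\<^sup>+z. \<integral>\<^sup>+\<omega>. f (z + walk_pos t \<omega>) \<partial>walk_space \<partial>measure_pmf lazy_step)"
  by (subst nn_integral_walk) (auto intro: meas_walk_fun)

lemma emeasure_walk_UNIV[simp]: "emeasure (walk_space :: (int^'d::finite) stream measure) UNIV = 1"
  using prob_space.emeasure_space_1[OF prob_space_walk[where 'd='d]] by simp

lemma nn_integral_walk_const: "(\<integral>\<^sup>+\<omega>. c \<partial>(walk_space :: (int^'d::finite) stream measure)) = c"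
  by simp

lemma mom2:
  fixes i :: "'d::finite" and a :: real
  shows "(\<integral>\<^sup>+\<omega>. ennreal ((a + real_of_int ((walk_pos t \<omega>)$i))\<^sup>2) \<partial>walk_space)
       = ennreal (a\<^sup>2 + real t / (2*CARD('d)))"
proof (induction t arbitrary: a)
  case 0
  show ?case by (simp add: nn_integral_walk_const)
next
  case (Suc t)
  have "(\<integral>\<^sup>+\<omega>. ennreal ((a + real_of_int ((walk_pos (Suc t) \<omega>)$i))\<^sup>2) \<partial>walk_space)
     = (\<integral>\<^sup>+z. ennreal ((a + real_of_int ((z::int^'d)$i))\<^sup>2 + real t / (2*CARD('d))) \<partial>measure_pmf lazy_step)"
    by (subst walk_step) (simp add: add.assoc Suc.IH[of "a + _", simplified add.assoc])
  also have "\<dots> = ennreal (a\<^sup>2 + real (Suc t) / (2*CARD('d)))"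
    apply (subst lazy_coord[where h = "\<lambda>x. (a + real_of_int x)\<^sup>2 + real t / (2*CARD('d))"])
     apply (intro add_nonneg_nonneg; simp)
    apply (rule arg_cong[where f=ennreal])
    apply (simp add: field_simps power2_eq_square)
    done
  finally show ?case .
qed

lemma alg4:
  fixes a t d :: real assumes "d > 0"
  shows "(1 - 1/(2*d)) * (a^4 + 6*a\<^sup>2*(t/(2*d)) + (t/(2*d) + 3*t*(t-1)*(1/(2*d))\<^sup>2))
    + ((a+1)^4 + 6*(a+1)\<^sup>2*(t/(2*d)) + (t/(2*d) + 3*t*(t-1)*(1/(2*d))\<^sup>2)
       + ((a + -1)^4 + 6*(a + -1)\<^sup>2*(t/(2*d)) + (t/(2*d) + 3*t*(t-1)*(1/(2*d))\<^sup>2))) / (4*d)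
    = a^4 + 6*a\<^sup>2*((t+1)/(2*d)) + (t+1)/(2*d) + 3*(t+1)*((t+1)-1)*(1/(2*d))\<^sup>2"
  using assms by (simp add: field_simps power2_eq_square power4_eq_xxxx)

lemma mom4:
  fixes i :: "'d::finite" and a :: real
  shows "(\<integral>\<^sup>+\<omega>. ennreal ((a + real_of_int ((walk_pos t \<omega>)$i))^4) \<partial>walk_space)
       = ennreal (a^4 + 6 * a\<^sup>2 * (real t / (2*CARD('d))) + real t / (2*CARD('d))
                  + 3 * real t * (real t - 1) * (1 / (2*CARD('d)))\<^sup>2)"
proof (induction t arbitrary: a)
  case 0
  show ?case by (simp add: nn_integral_walk_const)
next
  case (Suc t)
  let ?c = "real t / (2*CARD('d)) + 3 * real t * (real t - 1) * (1 / (2*CARD('d)))\<^sup>2"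
  have c0: "?c \<ge> 0"
  proof (cases t)
    case 0 then show ?thesis by simp
  next
    case (Suc t') then show ?thesis by (intro add_nonneg_nonneg mult_nonneg_nonneg) auto
  qed
  have "(\<integral>\<^sup>+\<omega>. ennreal ((a + real_of_int ((walk_pos (Suc t) \<omega>)$i))^4) \<partial>walk_space)
     = (\<integral>\<^sup>+z. ennreal ((a + real_of_int ((z::int^'d)$i))^4 + 6 * (a + real_of_int ((z::int^'d)$i))\<^sup>2 * (real t / (2*CARD('d))) + ?c) \<partial>measure_pmf lazy_step)"
    by (subst walk_step) (simp add: add.assoc Suc.IH[of "a + _", simplified add.assoc])
  also have "\<dots> = ennreal (a^4 + 6 * a\<^sup>2 * (real (Suc t) / (2*CARD('d))) + real (Suc t) / (2*CARD('d))
                  + 3 * real (Suc t) * (real (Suc t) - 1) * (1 / (2*CARD('d)))\<^sup>2)"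
    apply (subst lazy_coord[where h = "\<lambda>x. (a + real_of_int x)^4 + 6 * (a + real_of_int x)\<^sup>2 * (real t / (2*CARD('d))) + ?c"])
     apply (rule add_nonneg_nonneg[OF add_nonneg_nonneg c0])
      apply simp
     apply simp
    apply (rule arg_cong[where f=ennreal])
    using alg4[of "real CARD('d)" a "real t"] apply (simp add: ac_simps)
    done
  finally show ?case by (simp add: add.assoc)
qed

lemma axis_uminus: "- axis i (s::int) = axis i (-s)"
  by (simp add: vec_eq_iff axis_def)

lemma lazy_sym:
  fixes h :: "int^'d::finite \<Rightarrow> ennreal"
  shows "(\<integral>\<^sup>+z. h (-z) \<partial>measure_pmf lazy_step) = (\<integral>\<^sup>+z. h z \<partial>measure_pmf lazy_step)"
proof -
  let ?S = "{axis i s | i s. s \<in> {1, -1::int}} :: (int^'d) set"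
  have fin: "finite ?S" unfolding axis_set_eq by simp
  have ne: "?S \<noteq> {}" by auto
  have "(\<Sum>v\<in>?S. h (-v)) = (\<Sum>v\<in>?S. h v)"
  proof (rule sum.reindex_bij_witness[where i=uminus and j=uminus])
    fix v assume "v \<in> ?S"
    then obtain i s where "v = axis i s" "s \<in> {1,-1::int}" by blast
    then show "- v \<in> ?S" by (auto simp: axis_uminus intro!: exI[of _ i])
  next
    fix v assume "v \<in> ?S"
    then obtain i s where "v = axis i s" "s \<in> {1,-1::int}" by blast
    then show "- v \<in> ?S" by (auto simp: axis_uminus intro!: exI[of _ i])
  qed auto
  then have ps: "(\<integral>\<^sup>+z. h (-z) \<partial>measure_pmf (pmf_of_set ?S)) = (\<integral>\<^sup>+z. h z \<partial>measure_pmf (pmf_of_set ?S))"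
    by (simp only: nn_integral_pmf_of_set[OF ne fin])
  have r: "(\<integral>\<^sup>+z. g z \<partial>measure_pmf (return_pmf x)) = g x" for g :: "int^'d \<Rightarrow> ennreal" and x
    by (rule nn_integral_return_pmf) simp
  show ?thesis
    unfolding lazy_step_def nn_integral_bind_pmf
    apply (subst (1 2) nn_integral_bernoulli_pmf)
    apply (simp_all only: if_True if_False ps r)
    apply simp_all
    done
qed

lemma walk_sym:
  fixes f :: "int^'d::finite \<Rightarrow> ennreal"
  shows "(\<integral>\<^sup>+\<omega>. f (- walk_pos t \<omega>) \<partial>walk_space) = (\<integral>\<^sup>+\<omega>. f (walk_pos t \<omega>) \<partial>walk_space)"
proof (induction t arbitrary: f)
  case 0
  then show ?case by simp
next
  case (Suc t)
  have "(\<integral>\<^sup>+\<omega>. f (- walk_pos (Suc t) \<omega>) \<partial>walk_space)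
     = (\<integral>\<^sup>+z. \<integral>\<^sup>+\<omega>. f (-z + - walk_pos t \<omega>) \<partial>walk_space \<partial>measure_pmf lazy_step)"
    using walk_step[of "\<lambda>y. f (-y)" t] by simp
  also have "\<dots> = (\<integral>\<^sup>+z. \<integral>\<^sup>+\<omega>. f (-z + walk_pos t \<omega>) \<partial>walk_space \<partial>measure_pmf lazy_step)"
    apply (rule nn_integral_cong)
    subgoal for z using Suc.IH[of "\<lambda>y. f (-z + y)"] by simp
    done
  also have "\<dots> = (\<integral>\<^sup>+z. \<integral>\<^sup>+\<omega>. f (z + walk_pos t \<omega>) \<partial>walk_space \<partial>measure_pmf lazy_step)"
    by (rule lazy_sym[of "\<lambda>z. \<integral>\<^sup>+\<omega>. f (z + walk_pos t \<omega>) \<partial>walk_space"])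
  also have "\<dots> = (\<integral>\<^sup>+\<omega>. f (walk_pos (Suc t) \<omega>) \<partial>walk_space)"
    by (rule walk_step[symmetric])
  finally show ?case .
qed

lemma emeasure_walk_ind:
  "emeasure (walk_space :: (int^'d::finite) stream measure) {\<omega>. P (walk_pos t \<omega>)}
   = (\<integral>\<^sup>+\<omega>. indicator {v. P v} (walk_pos t \<omega>) \<partial>walk_space)"
proof -
  have m: "{\<omega>. P (walk_pos t \<omega>)} \<in> sets (walk_space :: (int^'d::finite) stream measure)"
    by (rule sets_walk_Collect)
  show ?thesis
    by (subst nn_integral_indicator[OF m, symmetric]) (auto intro!: nn_integral_cong simp: indicator_def)
qed

lemma anti_abs:
  fixes i :: "'d::finite" and L :: real and s :: nat
  defines "m \<equiv> real s / (2*CARD('d))"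
  assumes L: "L > 0" and m1: "1 \<le> m" and m2: "2 * L\<^sup>2 \<le> m"
  shows "emeasure (walk_space :: (int^'d) stream measure) {\<omega>. L \<le> \<bar>real_of_int ((walk_pos s \<omega>)$i)\<bar>} \<ge> ennreal (1/16)"
proof -
  define W where "W = (\<lambda>\<omega>. real_of_int ((walk_pos s \<omega>)$i))"
  define A where "A = {\<omega>. L \<le> \<bar>W \<omega>\<bar>}"
  have Am: "A \<in> sets (walk_space :: (int^'d) stream measure)"
    unfolding A_def W_def by (rule sets_walk_Collect)
  have Wm: "(\<lambda>\<omega>. ennreal (g (W \<omega>))) \<in> borel_measurable (walk_space :: (int^'d) stream measure)" for g
    unfolding W_def by (rule meas_walk_fun[of "\<lambda>v. ennreal (g (real_of_int (v$i)))"]) simp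
  have m0: "m > 0" using m1 by simp
  have pw: "ennreal ((W \<omega>)\<^sup>2) \<le> ennreal (L\<^sup>2) + (ennreal (1/(16*m)) * ennreal ((W \<omega>)^4) + ennreal (4*m) * indicator A \<omega>)" for \<omega>
  proof (cases "\<omega> \<in> A")
    case True
    have "(W \<omega>)\<^sup>2 \<le> (1/(16*m)) * (W \<omega>)^4 + 4*m"
    proof -
      have "0 \<le> ((W \<omega>)\<^sup>2 - 8*m)\<^sup>2" by simp
      then have "16*m*(W \<omega>)\<^sup>2 \<le> (W \<omega>)^4 + 64*m*m" by (simp add: power2_eq_square power4_eq_xxxx algebra_simps)
      then show ?thesis using m0 by (simp add: field_simps)
    qed
    then have "ennreal ((W \<omega>)\<^sup>2) \<le> ennreal ((1/(16*m)) * (W \<omega>)^4 + 4*m)" by (rule ennreal_leI)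
    also have "\<dots> = ennreal ((1/(16*m)) * (W \<omega>)^4) + ennreal (4*m)"
      by (rule ennreal_plus) (use m0 in auto)
    also have "\<dots> = ennreal (1/(16*m)) * ennreal ((W \<omega>)^4) + ennreal (4*m) * indicator A \<omega>"
    proof -
      have e: "ennreal ((1/(16*m)) * (W \<omega>)^4) = ennreal (1/(16*m)) * ennreal ((W \<omega>)^4)"
        by (rule ennreal_mult) (use m0 in auto)
      show ?thesis using True by (simp only: e indicator_simps if_True mult_1_right)
    qed
    also have "\<dots> \<le> ennreal (L\<^sup>2) + (ennreal (1/(16*m)) * ennreal ((W \<omega>)^4) + ennreal (4*m) * indicator A \<omega>)"
      by simp
    finally show ?thesis .
  next
    case False
    then have "\<bar>W \<omega>\<bar> < L" unfolding A_def by simp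
    then have "\<bar>W \<omega>\<bar> \<le> \<bar>L\<bar>" using L by simp
    then have "(W \<omega>)\<^sup>2 \<le> L\<^sup>2" by (simp only: abs_le_square_iff)
    then have "ennreal ((W \<omega>)\<^sup>2) \<le> ennreal (L\<^sup>2)" by (rule ennreal_leI)
    then show ?thesis by (simp add: add_increasing2)
  qed
  define E4 where "E4 = m + 3 * real s * (real s - 1) * (1 / (2*CARD('d)))\<^sup>2"
  have E4le: "E4 \<le> 4 * m\<^sup>2"
  proof -
    have "3 * real s * (real s - 1) * (1 / (2*CARD('d)))\<^sup>2 \<le> 3 * m\<^sup>2"
      unfolding m_def by (simp add: power2_eq_square field_simps mult_left_mono)
    moreover have "m \<le> m\<^sup>2" using m1 by (simp add: power2_eq_square)
    ultimately show ?thesis unfolding E4_def by simp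
  qed
  have I2: "(\<integral>\<^sup>+\<omega>. ennreal ((W \<omega>)\<^sup>2) \<partial>walk_space) = ennreal m"
    unfolding W_def m_def using mom2[of 0 s i] by simp
  have I4: "(\<integral>\<^sup>+\<omega>. ennreal ((W \<omega>)^4) \<partial>walk_space) = ennreal E4"
    unfolding W_def E4_def m_def using mom4[of 0 s i] by simp
  have c1: "(\<integral>\<^sup>+\<omega>. ennreal (1/(16*m)) * ennreal ((W \<omega>)^4) \<partial>walk_space) = ennreal (1/(16*m)) * ennreal E4"
    using nn_integral_cmult[OF Wm[of "\<lambda>x. x^4"], of "ennreal (1/(16*m))"] I4 by simp
  have c2: "(\<integral>\<^sup>+\<omega>. ennreal (4*m) * indicator A \<omega> \<partial>walk_space) = ennreal (4*m) * emeasure walk_space A"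
    using nn_integral_cmult[OF borel_measurable_indicator[OF Am], of "ennreal (4*m)"]
    by (simp only: nn_integral_indicator[OF Am])
  have "ennreal m \<le> (\<integral>\<^sup>+\<omega>. ennreal (L\<^sup>2) + (ennreal (1/(16*m)) * ennreal ((W \<omega>)^4) + ennreal (4*m) * indicator A \<omega>) \<partial>walk_space)"
    unfolding I2[symmetric] by (rule nn_integral_mono) (rule pw)
  also have "\<dots> = ennreal (L\<^sup>2) + (ennreal (1/(16*m)) * ennreal E4 + ennreal (4*m) * emeasure walk_space A)"
    apply (subst nn_integral_add)
      apply simp
     apply (intro borel_measurable_add borel_measurable_times_ennreal Wm borel_measurable_indicator Am measurable_const; simp)
    apply (subst nn_integral_add)
      apply (intro borel_measurable_times_ennreal Wm measurable_const; simp)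
     apply (intro borel_measurable_times_ennreal borel_measurable_indicator Am measurable_const; simp)
    apply (simp only: c1 c2 nn_integral_walk_const)
    done
  finally have ineq: "ennreal m \<le> ennreal (L\<^sup>2) + (ennreal (1/(16*m)) * ennreal E4 + ennreal (4*m) * emeasure walk_space A)" .
  have s1: "real s \<ge> 1" using m1 unfolding m_def by (cases s) auto
  have E40: "E4 \<ge> 0" unfolding E4_def using m0 s1 by (intro add_nonneg_nonneg mult_nonneg_nonneg) auto
  show ?thesis
  proof (rule ccontr)
    assume "\<not> ?thesis"
    then have lt: "emeasure walk_space A < ennreal (1/16)" unfolding A_def W_def by (simp add: not_le)
    then obtain p where p: "emeasure walk_space A = ennreal p" "0 \<le> p" "p < 1/16"
      by (metis ennreal_cases ennreal_less_iff infinity_ennreal_def linorder_not_le top_greatest zero_le_divide_1_iff zero_le_numeral)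
    have "ennreal m \<le> ennreal (L\<^sup>2 + ((1/(16*m)) * E4 + (4*m) * p))"
    proof -
      have a1: "0 \<le> (1/(16*m))*E4" using m0 E40 by simp
      have a2: "0 \<le> (4*m)*p" using m0 p(2) by simp
      have "ennreal (L\<^sup>2 + ((1/(16*m)) * E4 + (4*m) * p)) = ennreal (L\<^sup>2) + ennreal ((1/(16*m)) * E4 + (4*m) * p)"
        by (rule ennreal_plus) (use a1 a2 in auto)
      also have "ennreal ((1/(16*m)) * E4 + (4*m) * p) = ennreal ((1/(16*m)) * E4) + ennreal ((4*m) * p)"
        by (rule ennreal_plus[OF a1 a2])
      also have "ennreal ((1/(16*m)) * E4) = ennreal (1/(16*m)) * ennreal E4"
        by (rule ennreal_mult) (use m0 E40 in auto)
      also have "ennreal ((4*m) * p) = ennreal (4*m) * ennreal p"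
        by (rule ennreal_mult) (use m0 p(2) in auto)
      finally show ?thesis using ineq p(1) by simp
    qed
    then have "m \<le> L\<^sup>2 + ((1/(16*m)) * E4 + (4*m) * p)"
      by (subst (asm) ennreal_le_iff) (use m0 p(2) E40 in \<open>auto intro!: add_nonneg_nonneg\<close>)
    moreover have "(1/(16*m)) * E4 \<le> m / 4" using E4le m0 by (simp add: field_simps power2_eq_square)
    moreover have "(4*m) * p < m / 4" using p(3) m0 by simp
    ultimately show False using m2 by linarith
  qed
qed

lemma anti_box:
  fixes i :: "'d::finite" and L :: real and s :: nat and x :: "int^'d"
  assumes L: "L > 0" and m1: "1 \<le> real s / (2*CARD('d))" and m2: "2 * L\<^sup>2 \<le> real s / (2*CARD('d))"
    and x: "\<bar>real_of_int (x$i)\<bar> < L"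
  shows "measure (walk_space :: (int^'d) stream measure) {\<omega>. \<bar>real_of_int ((x + walk_pos s \<omega>)$i)\<bar> < L} \<le> 31/32"
proof -
  interpret P: prob_space "walk_space :: (int^'d) stream measure" by (rule prob_space_walk)
  define B1 :: "(int^'d) stream set" where "B1 = {\<omega>. (\<lambda>v. L \<le> real_of_int (v$i)) (walk_pos s \<omega>)}"
  define B2 :: "(int^'d) stream set" where "B2 = {\<omega>. (\<lambda>v. real_of_int (v$i) \<le> -L) (walk_pos s \<omega>)}"
  have B1m: "B1 \<in> sets walk_space" unfolding B1_def by (rule sets_walk_Collect)
  have B2m: "B2 \<in> sets walk_space" unfolding B2_def by (rule sets_walk_Collect)
  have eq12: "emeasure walk_space B2 = emeasure walk_space B1"
  proof -
    have "emeasure walk_space B2 = (\<integral>\<^sup>+\<omega>. indicator {v. L \<le> real_of_int (v$i)} (- walk_pos s \<omega>) \<partial>walk_space)"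
      unfolding B2_def emeasure_walk_ind[where P="\<lambda>v. real_of_int (v$i) \<le> -L"] by (intro nn_integral_cong) (auto simp: indicator_def)
    also have "\<dots> = (\<integral>\<^sup>+\<omega>. indicator {v. L \<le> real_of_int (v$i)} (walk_pos s \<omega>) \<partial>walk_space)"
      by (rule walk_sym)
    also have "\<dots> = emeasure walk_space B1"
      unfolding B1_def emeasure_walk_ind[where P="\<lambda>v. L \<le> real_of_int (v$i)"] by simp
    finally show ?thesis .
  qed
  have "{\<omega>. L \<le> \<bar>real_of_int ((walk_pos s \<omega>)$i)\<bar>} = B1 \<union> B2"
    unfolding B1_def B2_def by auto
  moreover have "B1 \<inter> B2 = {}" unfolding B1_def B2_def using L by auto
  ultimately have "emeasure walk_space {\<omega>. L \<le> \<bar>real_of_int ((walk_pos s \<omega>)$i)\<bar>} = emeasure walk_space B1 + emeasure walk_space B2"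
    using B1m B2m by (simp add: plus_emeasure)
  with anti_abs[OF L m1 m2, of i] eq12 have "ennreal (1/16) \<le> 2 * emeasure walk_space B1"
    by (simp add: mult_2)
  then have "ennreal (1/16) \<le> 2 * ennreal (measure walk_space B1)" by (simp add: P.emeasure_eq_measure)
  then have "ennreal (1/16) \<le> ennreal (2 * measure walk_space B1)" by (simp add: ennreal_mult)
  then have p1: "1/32 \<le> measure walk_space B1" by (subst (asm) ennreal_le_iff) auto
  have p2: "1/32 \<le> measure walk_space B2"
    using eq12 p1 by (simp add: P.emeasure_eq_measure)
  have sub: "{\<omega>. \<bar>real_of_int ((x + walk_pos s \<omega>)$i)\<bar> < L} \<subseteq> (if x$i \<ge> 0 then UNIV - B1 else UNIV - B2)"
    unfolding B1_def B2_def using x by auto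
  have "measure walk_space {\<omega>. \<bar>real_of_int ((x + walk_pos s \<omega>)$i)\<bar> < L} \<le> measure walk_space (if x$i \<ge> 0 then UNIV - B1 else UNIV - B2)"
    by (rule P.finite_measure_mono[OF sub]) (use sets.compl_sets[OF B1m] sets.compl_sets[OF B2m] in auto)
  also have "\<dots> \<le> 31/32"
    using P.prob_compl[OF B1m] P.prob_compl[OF B2m] p1 p2 by auto
  finally show ?thesis .
qed

lemma emeasure_walk_decomp:
  fixes A :: "(int^'d::finite) stream set" and S :: "int^'d \<Rightarrow> (int^'d) stream set"
  assumes A: "A \<in> sets walk_space" and S: "\<And>z. S z \<in> sets walk_space"
    and iff: "\<And>z X. (z ## X \<in> A) \<longleftrightarrow> (X \<in> S z)"
  shows "emeasure walk_space A = (\<integral>\<^sup>+z. emeasure walk_space (S z) \<partial>measure_pmf lazy_step)"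
proof -
  have "emeasure walk_space A = (\<integral>\<^sup>+X. indicator A X \<partial>walk_space)"
    by (rule nn_integral_indicator[symmetric]) (rule A)
  also have "\<dots> = (\<integral>\<^sup>+z. (\<integral>\<^sup>+X. indicator A (z ## X) \<partial>walk_space) \<partial>measure_pmf lazy_step)"
    by (rule nn_integral_walk) (rule borel_measurable_indicator[OF A])
  also have "\<dots> = (\<integral>\<^sup>+z. (\<integral>\<^sup>+X. indicator (S z) X \<partial>walk_space) \<partial>measure_pmf lazy_step)"
    by (simp add: indicator_def iff)
  also have "\<dots> = (\<integral>\<^sup>+z. emeasure walk_space (S z) \<partial>measure_pmf lazy_step)"
    by (simp only: nn_integral_indicator[OF S])
  finally show ?thesis .
qed

definition blockE :: "nat \<Rightarrow> nat \<Rightarrow> nat \<Rightarrow> nat \<Rightarrow> int^'d::finite \<Rightarrow> (int^'d) stream set" where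
  "blockE L s j t x = {\<omega>. \<forall>q\<le>j. in_box L (x + walk_pos (t + q * s) \<omega>)}"

definition boxF :: "nat \<Rightarrow> nat \<Rightarrow> int^'d::finite \<Rightarrow> (int^'d) stream set" where
  "boxF L t x = {\<omega>. in_box L (x + walk_pos t \<omega>)}"

lemma boxF_sets: "boxF L t x \<in> sets walk_space"
  unfolding boxF_def by (rule sets_walk_Collect[where P="\<lambda>v. in_box L (x + v)"])

lemma blockE_sets: "blockE L s j t x \<in> sets walk_space"
proof -
  have "blockE L s j t x = (\<Inter>q\<in>{..j}. boxF L (t + q * s) x)"
    unfolding blockE_def boxF_def by auto
  also have "\<dots> \<in> sets walk_space"
    by (rule sets.finite_INT) (auto intro: boxF_sets)
  finally show ?thesis .
qed

lemma boxF_0: "emeasure walk_space (boxF L 0 x) = (if in_box L x then 1 else 0)"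
  unfolding boxF_def by simp

lemma boxF_Suc: "emeasure walk_space (boxF L (Suc t) x) = (\<integral>\<^sup>+z. emeasure walk_space (boxF L t (x + z)) \<partial>measure_pmf lazy_step)"
  by (rule emeasure_walk_decomp[OF boxF_sets boxF_sets]) (simp add: boxF_def add.assoc)

lemma blockE_Suc: "emeasure walk_space (blockE L s j (Suc t) x) = (\<integral>\<^sup>+z. emeasure walk_space (blockE L s j t (x + z)) \<partial>measure_pmf lazy_step)"
  by (rule emeasure_walk_decomp[OF blockE_sets blockE_sets]) (simp add: blockE_def add.assoc)

lemma blockE_0_0: "blockE L s 0 t x = boxF L t x"
  unfolding blockE_def boxF_def by simp

lemma blockE_Suc_0: "blockE L s (Suc j) 0 x = (if in_box L x then blockE L s j s x else {})"
proof -
  have "(\<forall>q\<le>Suc j. P q) \<longleftrightarrow> P 0 \<and> (\<forall>q\<le>j. P (Suc q))" for P :: "nat \<Rightarrow> bool"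
  proof
    assume "\<forall>q\<le>Suc j. P q" then show "P 0 \<and> (\<forall>q\<le>j. P (Suc q))" by auto
  next
    assume a: "P 0 \<and> (\<forall>q\<le>j. P (Suc q))"
    show "\<forall>q\<le>Suc j. P q"
    proof (intro allI impI)
      fix q assume "q \<le> Suc j"
      then show "P q" using a by (cases q) auto
    qed
  qed
  then show ?thesis unfolding blockE_def by (auto simp: add.commute)
qed

lemma block_bound:
  fixes i :: "'d::finite" and L s :: nat
  assumes L: "L > 0" and m1: "1 \<le> real s / (2*CARD('d))" and m2: "2 * (real L)\<^sup>2 \<le> real s / (2*CARD('d))"
  shows "emeasure (walk_space :: (int^'d) stream measure) (blockE L s j t x) \<le> ennreal ((31/32)^j) * emeasure walk_space (boxF L t x)"
proof (induction j arbitrary: t x)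
  case 0
  then show ?case by (simp add: blockE_0_0)
next
  case (Suc j)
  show ?case
  proof (induction t arbitrary: x)
    case 0
    show ?case
    proof (cases "in_box L x")
      case False
      then show ?thesis by (simp add: blockE_Suc_0)
    next
      case True
      have "\<bar>x$i\<bar> < int L" using True unfolding in_box_def abs_less_iff by (metis minus_less_iff)
      then have xi: "\<bar>real_of_int (x$i)\<bar> < real L" by (metis of_int_abs of_int_less_iff of_int_of_nat_eq)
      have "emeasure walk_space (blockE L s (Suc j) 0 x) = emeasure walk_space (blockE L s j s x)"
        using True by (simp add: blockE_Suc_0)
      also have "\<dots> \<le> ennreal ((31/32)^j) * emeasure walk_space (boxF L s x)"
        by (rule Suc.IH)
      also have "emeasure walk_space (boxF L s x) \<le> ennreal (31/32)"
      proof -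
        interpret P: prob_space "walk_space :: (int^'d) stream measure" by (rule prob_space_walk)
        have sub: "boxF L s x \<subseteq> {\<omega>. (\<lambda>v. \<bar>real_of_int ((x + v)$i)\<bar> < real L) (walk_pos s \<omega>)}"
        proof
          fix \<omega> assume "\<omega> \<in> boxF L s x"
          then have h: "- int L < (x + walk_pos s \<omega>)$i \<and> (x + walk_pos s \<omega>)$i < int L"
            unfolding boxF_def in_box_def by blast
          then have "- real L < real_of_int ((x + walk_pos s \<omega>)$i) \<and> real_of_int ((x + walk_pos s \<omega>)$i) < real L"
            by (metis of_int_less_iff of_int_minus of_int_of_nat_eq)
          then show "\<omega> \<in> {\<omega>. (\<lambda>v. \<bar>real_of_int ((x + v)$i)\<bar> < real L) (walk_pos s \<omega>)}"
            by (simp add: abs_less_iff del: vector_add_component)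
        qed
        have "measure walk_space (boxF L s x) \<le> measure walk_space {\<omega>. (\<lambda>v. \<bar>real_of_int ((x + v)$i)\<bar> < real L) (walk_pos s \<omega>)}"
          by (rule P.finite_measure_mono[OF sub sets_walk_Collect])
        also have "\<dots> \<le> 31/32"
          using anti_box[where L="real L" and s=s and i=i and x=x] L m1 m2 xi by simp
        finally show ?thesis by (simp add: P.emeasure_eq_measure)
      qed
      then have "ennreal ((31/32)^j) * emeasure walk_space (boxF L s x) \<le> ennreal ((31/32)^j) * ennreal (31/32)"
        by (rule mult_left_mono) simp
      also have "\<dots> = ennreal ((31/32)^Suc j) * emeasure walk_space (boxF L 0 x)"
        using True by (simp add: boxF_0 ennreal_mult[symmetric] mult.commute)
      finally show ?thesis by simp
    qed
  next
    case (Suc t)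
    have "emeasure walk_space (blockE L s (Suc j) (Suc t) x) = (\<integral>\<^sup>+z. emeasure walk_space (blockE L s (Suc j) t (x + z)) \<partial>measure_pmf lazy_step)"
      by (rule blockE_Suc)
    also have "\<dots> \<le> (\<integral>\<^sup>+z. ennreal ((31/32)^Suc j) * emeasure walk_space (boxF L t (x + z)) \<partial>measure_pmf lazy_step)"
      by (rule nn_integral_mono) (rule Suc.IH)
    also have "\<dots> = ennreal ((31/32)^Suc j) * emeasure walk_space (boxF L (Suc t) x)"
      by (simp add: nn_integral_cmult boxF_Suc)
    finally show ?case .
  qed
qed

lemma exit_fin:
  assumes "exit_index n L \<omega> = enat l"
  shows "\<not> in_box L (walk_pos (n*l) \<omega>)" "\<And>l'. l' < l \<Longrightarrow> in_box L (walk_pos (n*l') \<omega>)"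
proof -
  have ex: "\<exists>l. \<not> in_box L (walk_pos (n * l) \<omega>)" and l: "l = (LEAST l. \<not> in_box L (walk_pos (n * l) \<omega>))"
    using assms unfolding exit_index_def by (auto split: if_splits)
  show "\<not> in_box L (walk_pos (n*l) \<omega>)" unfolding l by (rule LeastI_ex[OF ex])
  show "in_box L (walk_pos (n*l') \<omega>)" if "l' < l" for l'
    using not_less_Least[of l' "\<lambda>l. \<not> in_box L (walk_pos (n * l) \<omega>)"] that l by blast
qed

lemma exit_inf:
  assumes "exit_index n L \<omega> = \<infinity>"
  shows "in_box L (walk_pos (n*l) \<omega>)"
  using assms unfolding exit_index_def by (auto split: if_splits)

lemma in_box_0: "L > 0 \<Longrightarrow> in_box L 0"
  by (simp add: in_box_def)

lemma bound_N:
  fixes n L :: nat and Nd eps lnN :: real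
  assumes n: "n > 0" and L: "L > 0" and Nd: "Nd > 0" and eps: "eps > 0"
  shows "measure (walk_space :: (int^'d::finite) stream measure)
      {\<omega> \<in> space walk_space.
          ereal_of_enat (exit_index n L \<omega>) * ereal (real n / Nd) < ereal eps
        \<or> ereal_of_enat (exit_index n L \<omega>) * ereal (real n / Nd) > ereal lnN}
    \<le> eps * Nd / (2 * (real L)\<^sup>2)
       + (31/32) ^ (nat \<lfloor>Nd * lnN / real n\<rfloor> div nat \<lceil>4 * real CARD('d) * (real L)\<^sup>2 / real n\<rceil>)"
proof -
  interpret P: prob_space "walk_space :: (int^'d) stream measure" by (rule prob_space_walk)
  define T where "T = nat \<lfloor>eps * Nd\<rfloor>"
  define M0 where "M0 = nat \<lfloor>Nd * lnN / real n\<rfloor>"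
  define r where "r = nat \<lceil>4 * real CARD('d) * (real L)\<^sup>2 / real n\<rceil>"
  define k where "k = M0 div r"
  define s where "s = n * r"
  define B where "B = (\<lambda>i::'d. {\<omega>. \<exists>k\<le>T. real L \<le> \<bar>0 + real_of_int ((walk_pos k \<omega>)$i)\<bar>} :: (int^'d) stream set)"
  define E where "E = (blockE L s k 0 0 :: (int^'d) stream set)"
  have c0: "real n / Nd > 0" using n Nd by simp
  have lowsub: "\<omega> \<in> (\<Union>i. B i)" if h: "ereal_of_enat (exit_index n L \<omega>) * ereal (real n / Nd) < ereal eps" for \<omega>
  proof -
    obtain l where l: "exit_index n L \<omega> = enat l"
    proof (cases "exit_index n L \<omega>")
      case (enat l) then show ?thesis using that by blast
    next
      case infinity then show ?thesis using h c0 n Nd by simp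
    qed
    have "real l * (real n / Nd) < eps" using h l by simp
    then have "real (n*l) < eps * Nd" using Nd by (simp add: field_simps)
    then have nlT: "n*l \<le> T" unfolding T_def by linarith
    have "\<not> in_box L (walk_pos (n*l) \<omega>)" by (rule exit_fin(1)[OF l])
    then obtain i where "\<not> (- int L < (walk_pos (n*l) \<omega>)$i \<and> (walk_pos (n*l) \<omega>)$i < int L)"
      unfolding in_box_def by blast
    then have "real L \<le> \<bar>0 + real_of_int ((walk_pos (n*l) \<omega>)$i)\<bar>" by linarith
    then show ?thesis unfolding B_def using nlT by blast
  qed
  have uppsub: "\<omega> \<in> E" if h: "ereal_of_enat (exit_index n L \<omega>) * ereal (real n / Nd) > ereal lnN" for \<omega>
  proof -
    have inb: "in_box L (walk_pos (n*l') \<omega>)" if l': "l' \<le> M0" for l'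
    proof (cases "exit_index n L \<omega>")
      case infinity then show ?thesis by (rule exit_inf)
    next
      case (enat l)
      show ?thesis
      proof (cases "l' = 0")
        case True then show ?thesis using L by (simp add: in_box_0)
      next
        case False
        then have "M0 \<ge> 1" using l' by simp
        then have fl: "\<lfloor>Nd * lnN / real n\<rfloor> \<ge> 1" unfolding M0_def by linarith
        then have "real M0 = real_of_int \<lfloor>Nd * lnN / real n\<rfloor>" unfolding M0_def by simp
        then have "real M0 \<le> Nd * lnN / real n" by linarith
        moreover have "real l * (real n / Nd) > lnN" using h enat by simp
        then have "Nd * lnN / real n < real l" using n Nd by (simp add: field_simps)
        ultimately have "l' < l" using l' by linarith
        then show ?thesis by (rule exit_fin(2)[OF enat])
      qed
    qed
    show ?thesis unfolding E_def blockE_def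
    proof (intro CollectI allI impI)
      fix q assume q: "q \<le> k"
      have "q * r \<le> M0"
      proof -
        have "q * r \<le> k * r" using q by simp
        also have "\<dots> \<le> M0" unfolding k_def by simp
        finally show ?thesis .
      qed
      then have "in_box L (walk_pos (n*(q*r)) \<omega>)" by (rule inb)
      then show "in_box L (0 + walk_pos (0 + q * s) \<omega>)" unfolding s_def by (simp add: mult.commute mult.left_commute)
    qed
  qed
  have Bm: "B i \<in> sets walk_space" for i
  proof -
    have "B i = (\<Union>k\<in>{..T}. {\<omega>. (\<lambda>v. real L \<le> \<bar>0 + real_of_int (v$i)\<bar>) (walk_pos k \<omega>)})"
      unfolding B_def by auto
    also have "\<dots> \<in> sets walk_space"
      by (rule sets.finite_UN) (simp, rule sets_walk_Collect[where P="\<lambda>v. real L \<le> \<bar>0 + real_of_int (v$i)\<bar>"])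
    finally show ?thesis .
  qed
  have Em: "E \<in> sets walk_space" unfolding E_def by (rule blockE_sets)
  have UBm: "(\<Union>i. B i) \<in> sets walk_space" by (rule sets.finite_UN) (auto intro: Bm)
  have "measure (walk_space :: (int^'d) stream measure) {\<omega> \<in> space walk_space.
          ereal_of_enat (exit_index n L \<omega>) * ereal (real n / Nd) < ereal eps
        \<or> ereal_of_enat (exit_index n L \<omega>) * ereal (real n / Nd) > ereal lnN}
      \<le> measure walk_space ((\<Union>i. B i) \<union> E)"
    by (rule P.finite_measure_mono) (use lowsub uppsub in blast, use UBm Em in auto)
  also have "\<dots> \<le> measure walk_space (\<Union>i. B i) + measure walk_space E"
    by (rule measure_Un_le[OF UBm Em])
  also have "measure walk_space (\<Union>i. B i) \<le> (\<Sum>i\<in>UNIV. measure walk_space (B i))"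
    by (rule P.finite_measure_subadditive_finite) (auto intro: Bm)
  also have "\<dots> \<le> (\<Sum>i\<in>(UNIV::'d set). (real T / (2 * CARD('d))) / (real L)\<^sup>2)"
  proof (rule sum_mono)
    fix i :: 'd
    have "emeasure walk_space (B i) \<le> ennreal (((0::real)\<^sup>2 + real T / (2*CARD('d))) / (real L)\<^sup>2)"
      unfolding B_def by (rule lower_tail) (use L in simp)
    then show "measure walk_space (B i) \<le> (real T / (2 * CARD('d))) / (real L)\<^sup>2"
      by (simp add: P.emeasure_eq_measure ennreal_le_iff)
  qed
  also have "\<dots> = real T / (2 * (real L)\<^sup>2)" by simp
  also have "\<dots> \<le> eps * Nd / (2 * (real L)\<^sup>2)"
  proof -
    have "real T \<le> eps * Nd" unfolding T_def using eps Nd by simp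
    then show ?thesis using L by (simp add: divide_right_mono)
  qed
  also have "measure walk_space E \<le> (31/32) ^ k"
  proof -
    have s4: "real s \<ge> 4 * real CARD('d) * (real L)\<^sup>2"
    proof -
      have "4 * real CARD('d) * (real L)\<^sup>2 / real n \<le> real r" unfolding r_def by linarith
      then show ?thesis unfolding s_def using n by (simp add: field_simps)
    qed
    have m2: "2 * (real L)\<^sup>2 \<le> real s / (2*CARD('d))" using s4 by (simp add: field_simps)
    have "1 \<le> real L" using L by simp
    then have "1 \<le> (real L)\<^sup>2" by (simp add: one_le_power)
    then have "1 \<le> 2 * (real L)\<^sup>2" by simp
    then have m1: "1 \<le> real s / (2*CARD('d))" using m2 by linarith
    have "emeasure walk_space E \<le> ennreal ((31/32)^k) * emeasure walk_space (boxF L 0 (0::int^'d))"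
      unfolding E_def by (rule block_bound[OF L m1 m2])
    also have "\<dots> = ennreal ((31/32)^k)" using L by (simp add: boxF_0 in_box_0)
    finally show ?thesis by (simp add: P.emeasure_eq_measure ennreal_le_iff)
  qed
  finally show ?thesis unfolding k_def M0_def r_def by simp
qed

lemma nat_floor_le: "0 \<le> x \<Longrightarrow> real (nat \<lfloor>x\<rfloor>) \<le> x"
proof -
  assume x: "0 \<le> x"
  then have "real (nat \<lfloor>x\<rfloor>) = real_of_int \<lfloor>x\<rfloor>" by simp
  then show ?thesis by linarith
qed

lemma nat_floor_ge: "x - 1 \<le> real (nat \<lfloor>x\<rfloor>)"
proof (cases "0 \<le> x")
  case True
  then have "real (nat \<lfloor>x\<rfloor>) = real_of_int \<lfloor>x\<rfloor>" by simp
  then show ?thesis by linarith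
next
  case False then show ?thesis by simp
qed

lemma asym_n:
  fixes \<delta> :: real assumes "0 < \<delta>"
  shows "filterlim (\<lambda>N::nat. nat \<lfloor>real N powr \<delta>\<rfloor>) at_top sequentially"
proof -
  have "filterlim (\<lambda>N::nat. real N powr \<delta>) at_top sequentially"
    by (rule filterlim_compose[OF real_powr_at_top[OF assms] filterlim_real_sequentially])
  then have "filterlim (\<lambda>N::nat. -1 + real N powr \<delta>) at_top sequentially"
    by (rule filterlim_tendsto_add_at_top[OF tendsto_const])
  then have "filterlim (\<lambda>N::nat. real (nat \<lfloor>real N powr \<delta>\<rfloor>)) at_top sequentially"
    by (rule filterlim_at_top_mono) (auto intro!: always_eventually simp: nat_floor_ge[simplified])
  then show ?thesis by (rule real_asymp_real_nat_transfer(1))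
qed

lemma asym_p:
  fixes \<delta> :: real and D :: nat assumes "0 < \<delta>" "\<delta> < real D"
  shows "((\<lambda>N::nat. real (nat \<lfloor>real N powr \<delta>\<rfloor>) / real N ^ D) \<longlongrightarrow> 0) sequentially"
proof (rule real_tendsto_sandwich[where f="\<lambda>_. 0" and h="\<lambda>N. real N powr (\<delta> - real D)"])
  show "\<forall>\<^sub>F N in sequentially. 0 \<le> real (nat \<lfloor>real N powr \<delta>\<rfloor>) / real N ^ D" by simp
  show "\<forall>\<^sub>F N in sequentially. real (nat \<lfloor>real N powr \<delta>\<rfloor>) / real N ^ D \<le> real N powr (\<delta> - real D)"
  proof (rule eventually_sequentiallyI[of 1])
    fix N :: nat assume N: "1 \<le> N"
    have "real (nat \<lfloor>real N powr \<delta>\<rfloor>) \<le> real N powr \<delta>" by (rule nat_floor_le) simp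
    then have "real (nat \<lfloor>real N powr \<delta>\<rfloor>) / real N ^ D \<le> real N powr \<delta> / real N ^ D"
      using N by (simp add: divide_right_mono)
    also have "\<dots> = real N powr (\<delta> - real D)"
      using N by (simp add: powr_diff powr_realpow)
    finally show "real (nat \<lfloor>real N powr \<delta>\<rfloor>) / real N ^ D \<le> real N powr (\<delta> - real D)" .
  qed
  show "((\<lambda>_. 0) \<longlongrightarrow> (0::real)) sequentially" by simp
  show "((\<lambda>N. real N powr (\<delta> - real D)) \<longlongrightarrow> 0) sequentially"
    by (rule tendsto_neg_powr) (use assms in \<open>simp_all add: filterlim_real_sequentially\<close>)
qed

lemma asym_eps:
  fixes n :: "nat \<Rightarrow> nat" assumes "filterlim n at_top sequentially"
  shows "((\<lambda>N. 1 / sqrt (ln (ln (real (n N))))) \<longlongrightarrow> 0) sequentially"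
proof -
  have "filterlim (\<lambda>N. real (n N)) at_top sequentially"
    by (rule filterlim_compose[OF filterlim_real_sequentially assms])
  then have "filterlim (\<lambda>N. ln (real (n N))) at_top sequentially"
    by (rule filterlim_compose[OF ln_at_top])
  then have "filterlim (\<lambda>N. ln (ln (real (n N)))) at_top sequentially"
    by (rule filterlim_compose[OF ln_at_top])
  then have "filterlim (\<lambda>N. sqrt (ln (ln (real (n N))))) at_top sequentially"
    by (rule filterlim_compose[OF sqrt_at_top])
  then have "((\<lambda>N. inverse (sqrt (ln (ln (real (n N)))))) \<longlongrightarrow> 0) sequentially"
    by (rule tendsto_inverse_0_at_top)
  then show ?thesis by (simp add: inverse_eq_divide)
qed

lemma geqt:
  fixes a b Nd lnN :: real
  assumes n: "b > 0" and Nd: "Nd > 0" and a: "a > 0"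
  shows "inverse (a / Nd + b / Nd) * (lnN - b / Nd) = (Nd * lnN / b - 1) / (a / b + 1)"
proof -
  have e1: "a / Nd + b / Nd = (a + b) / Nd" by (simp add: add_divide_distrib)
  have e2: "lnN - b / Nd = (Nd * lnN - b) / Nd" using Nd by (simp add: diff_divide_distrib)
  have e3: "Nd * lnN / b - 1 = (Nd * lnN - b) / b" using n by (simp add: diff_divide_distrib)
  have e4: "a / b + 1 = (a + b) / b" using n by (simp add: add_divide_distrib)
  have "inverse (a / Nd + b / Nd) * (lnN - b / Nd) = (Nd / (a + b)) * ((Nd * lnN - b) / Nd)"
    unfolding e1 e2 by (simp add: inverse_eq_divide)
  also have "\<dots> = (Nd * lnN - b) / (a + b)" using Nd by simp
  also have "\<dots> = ((Nd * lnN - b) / b) / ((a + b) / b)" using n a by simp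
  also have "\<dots> = (Nd * lnN / b - 1) / (a / b + 1)" unfolding e3 e4 ..
  finally show ?thesis .
qed
lemma div_lt_aux: "M < (M div r + 1) * r" if r: "r > 0" for M r :: nat
proof -
  have "M = M div r * r + M mod r" by simp
  moreover have "M mod r < r" using r by simp
  moreover have "(M div r + 1) * r = M div r * r + r" by simp
  ultimately show ?thesis by linarith
qed

lemma div_ge: "r > 0 \<Longrightarrow> real (M div r) \<ge> real M / real r - 1" for M r :: nat
proof -
  assume r: "r > 0"
  have "M < (M div r + 1) * r" using r by (rule div_lt_aux)
  then have "real M < real ((M div r + 1) * r)" by (simp only: of_nat_less_iff)
  then have "real M < (real (M div r) + 1) * real r" by (simp add: distrib_right)
  then have "real M / real r < real (M div r) + 1" using r by (simp add: divide_less_eq)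
  then show ?thesis by linarith
qed

lemma kbound:
  fixes n L D :: nat and Nd lnN :: real
  assumes n: "n > 0" and L: "L > 0" and D: "D > 0" and Nd: "Nd > 0"
    and g0: "0 \<le> inverse (4 * real D * ((real L)\<^sup>2 / Nd) + real n / Nd) * (lnN - real n / Nd)"
  shows "inverse (4 * real D * ((real L)\<^sup>2 / Nd) + real n / Nd) * (lnN - real n / Nd) - 1
     \<le> real (nat \<lfloor>Nd * lnN / real n\<rfloor> div nat \<lceil>4 * real D * (real L)\<^sup>2 / real n\<rceil>)"
proof -
  define x where "x = Nd * lnN / real n"
  define y where "y = 4 * real D * (real L)\<^sup>2 / real n"
  define g where "g = inverse (4 * real D * ((real L)\<^sup>2 / Nd) + real n / Nd) * (lnN - real n / Nd)"
  have y0: "y > 0" unfolding y_def using n L D by simp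
  have geq: "g = (x - 1) / (y + 1)"
  proof -
    have "4 * real D * ((real L)\<^sup>2 / Nd) = (4 * real D * (real L)\<^sup>2) / Nd" by simp
    then show ?thesis unfolding g_def x_def y_def
      using geqt[of "real n" Nd "4 * real D * (real L)\<^sup>2" lnN] n Nd L D by simp
  qed
  have x1: "x - 1 \<ge> 0" using g0 y0 unfolding g_def[symmetric] geq by (simp add: zero_le_divide_iff)
  define M0 where "M0 = nat \<lfloor>x\<rfloor>"
  define r where "r = nat \<lceil>y\<rceil>"
  have r0: "r > 0" unfolding r_def using y0 by simp
  have ry: "real r \<le> y + 1" unfolding r_def using y0 by linarith
  have Mx: "x - 1 \<le> real M0" unfolding M0_def by (rule nat_floor_ge)
  have "g = (x - 1) / (y + 1)" by (rule geq)
  also have "\<dots> \<le> (x - 1) / real r" using x1 ry r0 by (intro divide_left_mono) auto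
  also have "\<dots> \<le> real M0 / real r" using Mx r0 by (simp add: divide_right_mono)
  finally have "g - 1 \<le> real M0 / real r - 1" by simp
  also have "\<dots> \<le> real (M0 div r)" by (rule div_ge[OF r0])
  finally show ?thesis unfolding g_def M0_def r_def x_def y_def .
qed

theorem mainTheorem4:
  fixes m :: "nat \<Rightarrow> nat" and A \<delta> :: real
  assumes d3: "CARD('d::finite) \<ge> 3"
    and A_pos: "0 < A"
    and lim: "(\<lambda>N. real (m N * N) ^ 2 / real N ^ CARD('d)) \<longlonglongrightarrow> A"
    and delta_lo: "2 < \<delta>" and delta_hi: "\<delta> < real CARD('d)"
  shows "(\<lambda>N. let L = m N * N; n = nat \<lfloor>real N powr \<delta>\<rfloor> in
           measure (walk_space :: (int ^ 'd) stream measure)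
             {\<omega> \<in> space walk_space.
                ereal_of_enat (exit_index n L \<omega>) * ereal (real n / real N ^ CARD('d))
                  < ereal (1 / sqrt (ln (ln (real n))))
              \<or> ereal_of_enat (exit_index n L \<omega>) * ereal (real n / real N ^ CARD('d))
                  > ereal (ln (real N))})
         \<longlonglongrightarrow> 0"
proof -
  define D where "D = CARD('d)"
  have D0: "D > 0" unfolding D_def by simp
  define L where "L = (\<lambda>N::nat. m N * N)"
  define n where "n = (\<lambda>N::nat. nat \<lfloor>real N powr \<delta>\<rfloor>)"
  define eps where "eps = (\<lambda>N. 1 / sqrt (ln (ln (real (n N)))))"
  define q where "q = (\<lambda>N::nat. (real (L N))\<^sup>2 / real N ^ D)"
  define p where "p = (\<lambda>N::nat. real (n N) / real N ^ D)"
  define g where "g = (\<lambda>N::nat. inverse (4 * real D * q N + p N) * (ln (real N) - p N))"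
  define k where "k = (\<lambda>N::nat. nat \<lfloor>real N ^ D * ln (real N) / real (n N)\<rfloor> div nat \<lceil>4 * real D * (real (L N))\<^sup>2 / real (n N)\<rceil>)"
  define u where "u = (\<lambda>N::nat. eps N * real N ^ D / (2 * (real (L N))\<^sup>2))"
  have qA: "q \<longlonglongrightarrow> A" using lim unfolding q_def L_def D_def .
  have d0: "0 < \<delta>" using delta_lo by simp
  have nlim: "filterlim n at_top sequentially" unfolding n_def by (rule asym_n[OF d0])
  have plim: "p \<longlonglongrightarrow> 0" unfolding p_def n_def by (rule asym_p[OF d0]) (use delta_hi D_def in simp)
  have epslim: "eps \<longlonglongrightarrow> 0" unfolding eps_def by (rule asym_eps[OF nlim])
  have ulim: "u \<longlonglongrightarrow> 0"
  proof -
    have "u = (\<lambda>N. eps N * inverse (q N) / 2)"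
      by (rule ext) (simp add: u_def q_def inverse_divide)
    moreover have "(\<lambda>N. eps N * inverse (q N) / 2) \<longlonglongrightarrow> 0 * inverse A / 2"
      by (intro tendsto_intros epslim qA) (use A_pos in simp_all)
    ultimately show ?thesis by simp
  qed
  have glim: "filterlim g at_top sequentially"
  proof -
    have il: "(\<lambda>N. inverse (4 * real D * q N + p N)) \<longlonglongrightarrow> inverse (4 * real D * A + 0)"
      by (intro tendsto_intros qA plim) (use A_pos D0 in simp_all)
    have "filterlim (\<lambda>N. - p N + ln (real N)) at_top sequentially"
      by (rule filterlim_tendsto_add_at_top[OF tendsto_minus[OF plim]])
         (rule filterlim_compose[OF ln_at_top filterlim_real_sequentially])
    then have fl: "filterlim (\<lambda>N. ln (real N) - p N) at_top sequentially" by simp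
    have c0: "0 < inverse (4 * real D * A + 0)" using A_pos D0 by simp
    show ?thesis unfolding g_def
      by (rule filterlim_tendsto_pos_mult_at_top[OF il c0 fl])
  qed
  have ev_n: "\<forall>\<^sub>F N in sequentially. 1 \<le> n N" using nlim unfolding filterlim_at_top by blast
  have ev_g: "\<forall>\<^sub>F N in sequentially. 0 \<le> g N" using glim unfolding filterlim_at_top by blast
  have ev_q: "\<forall>\<^sub>F N in sequentially. 0 < q N" by (rule order_tendstoD(1)[OF qA A_pos])
  have ev_N: "\<forall>\<^sub>F N in sequentially. 1 \<le> N" by (rule eventually_ge_at_top)
  have lnlim: "filterlim (\<lambda>N. ln (ln (real (n N)))) at_top sequentially"
    by (rule filterlim_compose[OF ln_at_top filterlim_compose[OF ln_at_top filterlim_compose[OF filterlim_real_sequentially nlim]]])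
  have ev_e: "\<forall>\<^sub>F N in sequentially. 1 \<le> ln (ln (real (n N)))" using lnlim unfolding filterlim_at_top by blast
  have ev_L: "\<forall>\<^sub>F N in sequentially. 0 < L N"
    using ev_q by eventually_elim (auto simp: q_def intro: Nat.gr0I)
  have klimr: "filterlim (\<lambda>N. real (k N)) at_top sequentially"
  proof (rule filterlim_at_top_mono)
    show "filterlim (\<lambda>N. -1 + g N) at_top sequentially"
      by (rule filterlim_tendsto_add_at_top[OF tendsto_const glim])
    show "\<forall>\<^sub>F N in sequentially. -1 + g N \<le> real (k N)"
      using ev_n ev_L ev_g ev_N
    proof eventually_elim
      case (elim N)
      have "g N - 1 \<le> real (k N)" unfolding g_def q_def p_def k_def
        by (rule kbound) (use elim D0 in \<open>auto simp: g_def q_def p_def\<close>)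
      then show ?case by simp
    qed
  qed
  have klim: "filterlim k at_top sequentially" by (rule real_asymp_real_nat_transfer(1)[OF klimr])
  have vlim: "(\<lambda>N. (31/32::real) ^ (k N)) \<longlonglongrightarrow> 0"
    by (rule filterlim_compose[OF LIMSEQ_power_zero klim]) simp
  show ?thesis unfolding Let_def
  proof (rule real_tendsto_sandwich[where f="\<lambda>_. 0" and h="\<lambda>N. u N + (31/32) ^ (k N)"])
    show "\<forall>\<^sub>F N in sequentially. 0 \<le> measure (walk_space :: (int ^ 'd) stream measure)
             {\<omega> \<in> space walk_space.
                ereal_of_enat (exit_index (nat \<lfloor>real N powr \<delta>\<rfloor>) (m N * N) \<omega>) * ereal (real (nat \<lfloor>real N powr \<delta>\<rfloor>) / real N ^ CARD('d))
                  < ereal (1 / sqrt (ln (ln (real (nat \<lfloor>real N powr \<delta>\<rfloor>)))))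
              \<or> ereal_of_enat (exit_index (nat \<lfloor>real N powr \<delta>\<rfloor>) (m N * N) \<omega>) * ereal (real (nat \<lfloor>real N powr \<delta>\<rfloor>) / real N ^ CARD('d))
                  > ereal (ln (real N))}"
      by simp
    show "\<forall>\<^sub>F N in sequentially. measure (walk_space :: (int ^ 'd) stream measure)
             {\<omega> \<in> space walk_space.
                ereal_of_enat (exit_index (nat \<lfloor>real N powr \<delta>\<rfloor>) (m N * N) \<omega>) * ereal (real (nat \<lfloor>real N powr \<delta>\<rfloor>) / real N ^ CARD('d))
                  < ereal (1 / sqrt (ln (ln (real (nat \<lfloor>real N powr \<delta>\<rfloor>)))))
              \<or> ereal_of_enat (exit_index (nat \<lfloor>real N powr \<delta>\<rfloor>) (m N * N) \<omega>) * ereal (real (nat \<lfloor>real N powr \<delta>\<rfloor>) / real N ^ CARD('d))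
                  > ereal (ln (real N))} \<le> u N + (31/32) ^ (k N)"
      using ev_n ev_L ev_N ev_e
    proof eventually_elim
      case (elim N)
      have e0: "eps N > 0" unfolding eps_def using elim by simp
      have b: "measure (walk_space :: (int ^ 'd) stream measure)
      {\<omega> \<in> space walk_space.
          ereal_of_enat (exit_index (n N) (L N) \<omega>) * ereal (real (n N) / real N ^ CARD('d)) < ereal (eps N)
        \<or> ereal_of_enat (exit_index (n N) (L N) \<omega>) * ereal (real (n N) / real N ^ CARD('d)) > ereal (ln (real N))}
    \<le> eps N * real N ^ CARD('d) / (2 * (real (L N))\<^sup>2)
       + (31/32) ^ (nat \<lfloor>real N ^ CARD('d) * ln (real N) / real (n N)\<rfloor> div nat \<lceil>4 * real CARD('d) * (real (L N))\<^sup>2 / real (n N)\<rceil>)"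
        by (rule bound_N) (use elim e0 in auto)
      show ?case
        using b unfolding u_def k_def n_def L_def eps_def D_def .
    qed
    show "(\<lambda>_. 0) \<longlonglongrightarrow> (0::real)" by simp
    show "(\<lambda>N. u N + (31/32) ^ (k N)) \<longlonglongrightarrow> 0"
      using tendsto_add[OF ulim vlim] by simp
  qed
qed

end
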